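(* Suppose Assumption A1 and Assumption A2(i) hold, let $K$ be $(\kappa,\gamma)$-strongly stable and $H=\lceil2\gamma^{-1}\log T\rceil$. Then for any $T\ge3$, $t\in[0,T-1]$, $k\in[0,H+1]$, $C>0$ and $M_{t-1-H},\dots,M_t,\check M_{t-k}\in\mathcal M$, with probability at least $1-\frac{30\sigma_w\kappa_B^2\kappa^6}{C\gamma^2(1-\gamma)}$, $$|F_t(M_{t-1-H:t})-F_t(M_{t-1-H:t-k-1},\check M_{t-k},M_{t-k+1:t})|\le2G_cC^2\log T\,(2\gamma^{-1}\log T+1)^{1/2}\,\|M_{t-k}-\check M_{t-k}\|_F.$$
   Context: Linear system $x_{t+1}=Ax_t+Bu_t+w_t$; $\kappa_B:=\max\{\|B\|,1\}$; $w_s:=0$ for $s<0$. $(\kappa,\gamma)$-strong stability: complex $P,Q$ with $A-BK=QPQ^{-1}$, $\|P\|\le1-\gamma$, $\|K\|,\|Q\|,\|Q^{-1}\|\le\kappa$. $A_K:=A-BK$. Assumption A1: $c_t$ convex, differentiable, $\|\nabla_xc_t(x,u)\|\le G_c\|x\|$, $\|\nabla_uc_t(x,u)\|\le G_c\|u\|$ for all $x,u,t$, $G_c\ge1$. Assumption A2(i): $\mathbb E\|w_t\|\le\sigma_w$ for all $t$. For $M=\{M^{[0]},\dots,M^{[H-1]}\}$, $\|M\|_F:=\|[M^{[0]},\dots,M^{[H-1]}]\|_F$; $\mathcal M:=\{M:\|M^{[i]}\|\le2\kappa_B\kappa^3(1-\gamma)^i\}$. Surrogate: $\Psi^{K,h}_{t,i}(M_{t-h:t}):=A_K^i\mathbf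 1_{i\le h}+\sum_{j=0}^hA_K^jBM_{t-j}^{[i-j-1]}\mathbf 1_{i-j\in[1,H]}$; $y_t:=\sum_{i=0}^{2H}\Psi^{K,H}_{t-1,i}(M_{t-1-H:t-1})w_{t-1-i}$; $v_t:=-Ky_t+\sum_{i=1}^HM_t^{[i-1]}w_{t-i}$; $F_t(M_{t-1-H:t}):=c_t(y_t,v_t)$. *)

theory Defs
  imports "HOL-Probability.Probability"
begin

(* Operator (spectral) norm of a matrix: norm of the induced linear map.
   Note: the Isabelle "norm" of a matrix of type real^'n^'m is its Frobenius norm. *)
definition opnorm :: "('a::real_normed_field)^'n^'m \<Rightarrow> real" where
  "opnorm A = onorm (\<lambda>x. A *v x)"

fun mpow :: "('a::semiring_1)^'n^'n \<Rightarrow> nat \<Rightarrow> 'a^'n^'n" where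
  "mpow A 0 = mat 1"
| "mpow A (Suc i) = A ** mpow A i"

definition cmat :: "real^'n^'m \<Rightarrow> complex^'n^'m" where
  "cmat A = (\<chi> i j. complex_of_real (A $ i $ j))"

definition kappaB :: "real^'m^'n \<Rightarrow> real" where
  "kappaB B = max (opnorm B) 1"

definition strongly_stable ::
  "real^'n^'n \<Rightarrow> real^'m^'n \<Rightarrow> real^'n^'m \<Rightarrow> real \<Rightarrow> real \<Rightarrow> bool" where
  "strongly_stable A B K \<kappa> \<gamma> \<longleftrightarrow>
     (\<exists>(P::complex^'n^'n) (Q::complex^'n^'n) Qi.
        Q ** Qi = mat 1 \<and> Qi ** Q = mat 1 \<and>
        cmat (A - B ** K) = Q ** P ** Qi \<and>
        opnorm P \<le> 1 - \<gamma> \<and> opnorm K \<le> \<kappa> \<and> opnorm Q \<le> \<kappa> \<and> opnorm Qi \<le> \<kappa>)"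

(* A disturbance-action parameter M = {M^[0],...,M^[H-1]} is a function nat => matrix,
   of which only the entries i < H are used. *)
definition frob :: "nat \<Rightarrow> (nat \<Rightarrow> real^'n^'m) \<Rightarrow> real" where
  "frob H M = sqrt (\<Sum>i<H. (norm (M i))\<^sup>2)"

definition Mset :: "nat \<Rightarrow> real \<Rightarrow> real \<Rightarrow> real \<Rightarrow> (nat \<Rightarrow> real^'n^'m) set" where
  "Mset H \<kappa>B \<kappa> \<gamma> = {M. \<forall>i<H. opnorm (M i) \<le> 2 * \<kappa>B * \<kappa>^3 * (1 - \<gamma>)^i}"

definition assumption_A1 :: "(nat \<Rightarrow> real^'n \<Rightarrow> real^'m \<Rightarrow> real) \<Rightarrow> real \<Rightarrow> bool" where
  "assumption_A1 c Gc \<longleftrightarrow> Gc \<ge> 1 \<and>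
     (\<forall>t. convex_on UNIV (\<lambda>p. c t (fst p) (snd p)) \<and>
       (\<forall>x u. \<exists>gx gu. ((\<lambda>p. c t (fst p) (snd p)) has_derivative
                         (\<lambda>h. gx \<bullet> fst h + gu \<bullet> snd h)) (at (x, u)) \<and>
                    norm gx \<le> Gc * norm x \<and> norm gu \<le> Gc * norm u))"

definition wext :: "(nat \<Rightarrow> 'a::zero) \<Rightarrow> int \<Rightarrow> 'a" where
  "wext w s = (if s < 0 then 0 else w (nat s))"

definition Psi :: "real^'n^'n \<Rightarrow> real^'m^'n \<Rightarrow> real^'n^'m \<Rightarrow> nat \<Rightarrow>
                   (int \<Rightarrow> nat \<Rightarrow> real^'n^'m) \<Rightarrow> int \<Rightarrow> nat \<Rightarrow> nat \<Rightarrow> real^'n^'n" where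
  "Psi A B K H M t h i =
     (if i \<le> h then mpow (A - B ** K) i else 0) +
     (\<Sum>j\<in>{0..h}. if j < i \<and> i - j \<le> H
                   then mpow (A - B ** K) j ** B ** M (t - int j) (i - j - 1) else 0)"

definition ysur :: "real^'n^'n \<Rightarrow> real^'m^'n \<Rightarrow> real^'n^'m \<Rightarrow> nat \<Rightarrow>
                   (int \<Rightarrow> nat \<Rightarrow> real^'n^'m) \<Rightarrow> (int \<Rightarrow> real^'n) \<Rightarrow> int \<Rightarrow> real^'n" where
  "ysur A B K H M w t = (\<Sum>i\<in>{0..2*H}. Psi A B K H M (t - 1) H i *v w (t - 1 - int i))"

definition vsur :: "real^'n^'n \<Rightarrow> real^'m^'n \<Rightarrow> real^'n^'m \<Rightarrow> nat \<Rightarrow>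
                   (int \<Rightarrow> nat \<Rightarrow> real^'n^'m) \<Rightarrow> (int \<Rightarrow> real^'n) \<Rightarrow> int \<Rightarrow> real^'m" where
  "vsur A B K H M w t = - (K *v ysur A B K H M w t) +
     (\<Sum>i\<in>{1..H}. M t (i - 1) *v w (t - int i))"

(* F_t(M_{t-1-H:t}) = c_t(y_t, v_t); depends only on M s for s in [t-1-H, t] *)
definition Fsur :: "(nat \<Rightarrow> real^'n \<Rightarrow> real^'m \<Rightarrow> real) \<Rightarrow> real^'n^'n \<Rightarrow> real^'m^'n \<Rightarrow>
                   real^'n^'m \<Rightarrow> nat \<Rightarrow> (int \<Rightarrow> nat \<Rightarrow> real^'n^'m) \<Rightarrow> (int \<Rightarrow> real^'n) \<Rightarrow> nat \<Rightarrow> real" where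
  "Fsur c A B K H M w t = c t (ysur A B K H M w (int t)) (vsur A B K H M w (int t))"

end

theory Submission
  imports Defs
begin

lemma opnorm_mv: "norm (X *v x) \<le> opnorm X * norm x"
  for X :: "'a::{euclidean_space,real_normed_field}^'n^'m"
  unfolding opnorm_def by (rule onorm) simp

lemma frob_mv: "norm (X *v x) \<le> norm X * norm (x::real^'n)"
  for X :: "real^'n^'m"
proof -
  have c: "\<bar>(X *v x) $ i\<bar> \<le> norm (X $ i) * norm x" for i
  proof -
    have "(X *v x) $ i = inner (X $ i) x"
      by (simp add: matrix_vector_mult_def inner_vec_def)
    then show ?thesis using Cauchy_Schwarz_ineq2 by simp
  qed
  have "norm (X *v x) = L2_set (\<lambda>i. norm ((X *v x) $ i)) UNIV" by (simp add: norm_vec_def)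
  also have "\<dots> \<le> L2_set (\<lambda>i. norm (X $ i) * norm x) UNIV"
    by (rule L2_set_mono) (use c in auto)
  also have "\<dots> = L2_set (\<lambda>i. norm (X $ i)) UNIV * norm x"
    by (simp add: L2_set_left_distrib)
  also have "\<dots> = norm X * norm x" by (simp add: norm_vec_def)
  finally show ?thesis .
qed

definition cvec :: "real^'n \<Rightarrow> complex^'n" where
  "cvec x = (\<chi> i. complex_of_real (x $ i))"

lemma cmat_mult: "cmat (X ** Y) = cmat X ** cmat Y"
  by (simp add: cmat_def matrix_matrix_mult_def vec_eq_iff)

lemma cmat_one: "cmat (mat 1 :: real^'n^'n) = mat 1"
  by (simp add: cmat_def mat_def vec_eq_iff)

lemma cmat_mv: "cmat X *v cvec x = cvec (X *v x)"
  by (simp add: cmat_def cvec_def matrix_vector_mult_def vec_eq_iff)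

lemma norm_cvec: "norm (cvec x) = norm x"
  by (simp add: norm_vec_def cvec_def)

lemma mpow_P: "norm (mpow P j *v z) \<le> p ^ j * norm z"
  if "opnorm P \<le> p" for P :: "complex^'n^'n"
proof (induction j)
  case 0 then show ?case by simp
next
  case (Suc j)
  have p0: "0 \<le> p" using that order_trans[OF onorm_pos_le] by (metis opnorm_def matrix_vector_mul_bounded_linear)
  have "norm (mpow P (Suc j) *v z) = norm (P *v (mpow P j *v z))"
    by (simp add: matrix_vector_mul_assoc)
  also have "\<dots> \<le> opnorm P * norm (mpow P j *v z)" by (rule opnorm_mv)
  also have "\<dots> \<le> p * (p^j * norm z)"
    by (intro mult_mono that Suc.IH p0) (auto simp: opnorm_def onorm_pos_le)
  finally show ?case by simp
qed

lemma cmat_mpow: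
  assumes "Q ** Qi = mat 1" "Qi ** Q = mat 1" "cmat X = Q ** P ** Qi"
  shows "cmat (mpow X j) = Q ** mpow P j ** Qi"
proof (induction j)
  case 0 then show ?case using assms by (simp add: cmat_one)
next
  case (Suc j)
  have "cmat (mpow X (Suc j)) = (Q ** P ** Qi) ** (Q ** mpow P j ** Qi)"
    by (simp add: cmat_mult Suc.IH assms)
  also have "\<dots> = Q ** P ** (Qi ** Q) ** mpow P j ** Qi" by (simp add: matrix_mul_assoc)
  also have "\<dots> = Q ** mpow P (Suc j) ** Qi" by (simp add: assms matrix_mul_assoc)
  finally show ?case .
qed


lemma opnorm_nonneg: "0 \<le> opnorm X" for X :: "'a::{euclidean_space,real_normed_field}^'n^'m"
  unfolding opnorm_def by (rule onorm_pos_le) simp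

lemma opnorm_mv_le: "opnorm X \<le> b \<Longrightarrow> norm (X *v x) \<le> b * norm x"
  for X :: "'a::{euclidean_space,real_normed_field}^'n^'m"
  by (meson opnorm_mv mult_right_mono norm_ge_zero order_trans)

lemma stab_pow:
  fixes A :: "real^'n^'n" and B :: "real^'m^'n" and K :: "real^'n^'m"
  assumes "strongly_stable A B K \<kappa> \<gamma>"
  shows "norm (mpow (A - B ** K) j *v x) \<le> \<kappa>^2 * (1-\<gamma>)^j * norm x"
proof -
  obtain P Q Qi :: "complex^'n^'n" where h: "Q ** Qi = mat 1" "Qi ** Q = mat 1" "cmat (A - B ** K) = Q ** P ** Qi"
     "opnorm P \<le> 1 - \<gamma>" "opnorm K \<le> \<kappa>" "opnorm Q \<le> \<kappa>" "opnorm Qi \<le> \<kappa>"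
    using assms unfolding strongly_stable_def by blast
  have k0: "0 \<le> \<kappa>" using h(5) opnorm_nonneg[of K] by linarith
  have g0: "0 \<le> 1 - \<gamma>" using h(4) opnorm_nonneg[of P] by linarith
  have e: "cvec (mpow (A - B ** K) j *v x) = Q *v (mpow P j *v (Qi *v cvec x))"
  proof -
    have "cvec (mpow (A - B ** K) j *v x) = cmat (mpow (A - B ** K) j) *v cvec x" by (simp add: cmat_mv)
    also have "\<dots> = (Q ** mpow P j ** Qi) *v cvec x" by (simp only: cmat_mpow[OF h(1-3)])
    also have "\<dots> = Q *v (mpow P j *v (Qi *v cvec x))" by (simp only: matrix_vector_mul_assoc matrix_mul_assoc)
    finally show ?thesis .
  qed
  have 1: "norm (Qi *v cvec x) \<le> \<kappa> * norm x"
    using opnorm_mv_le[OF h(7), of "cvec x"] by (simp add: norm_cvec)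
  have 2: "norm (mpow P j *v (Qi *v cvec x)) \<le> (1-\<gamma>)^j * (\<kappa> * norm x)"
    using mpow_P[OF h(4), of j "Qi *v cvec x"] 1 g0
    by (meson mult_left_mono order_trans zero_le_power)
  have 3: "norm (Q *v (mpow P j *v (Qi *v cvec x))) \<le> \<kappa> * ((1-\<gamma>)^j * (\<kappa> * norm x))"
    using opnorm_mv_le[OF h(6), of "mpow P j *v (Qi *v cvec x)"] 2 k0
    by (meson mult_left_mono order_trans)
  have "norm (mpow (A - B ** K) j *v x) = norm (Q *v (mpow P j *v (Qi *v cvec x)))"
    by (metis e norm_cvec)
  with 3 show ?thesis by (simp add: power2_eq_square mult_ac)
qed

lemma sum_mv: "(sum F S) *v x = (\<Sum>j\<in>S. F j *v x)"
  by (induction S rule: infinite_finite_induct) (auto simp: matrix_vector_mult_add_rdistrib)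

lemma if_bound: "(c \<Longrightarrow> norm (X *v x) \<le> b * norm x) \<Longrightarrow> norm ((if c then X else 0) *v x) \<le> (if c then b else 0) * norm x"
  for X :: "real^'n^'m"
  by (cases c) auto

definition beta :: "real \<Rightarrow> real \<Rightarrow> real \<Rightarrow> nat \<Rightarrow> nat \<Rightarrow> real" where
  "beta kB k g H i = (if i \<le> H then k^2 * (1-g)^i else 0) +
     (\<Sum>j\<in>{0..H}. if j < i \<and> i - j \<le> H then k^2 * (1-g)^j * kB * (2 * kB * k^3 * (1-g)^(i-j-1)) else 0)"

lemma kappaB_mv: "norm (B *v x) \<le> kappaB B * norm x"
  by (rule opnorm_mv_le) (simp add: kappaB_def)

lemma Mset_mv: "M \<in> Mset H kB k g \<Longrightarrow> l < H \<Longrightarrow> norm (M l *v x) \<le> 2 * kB * k^3 * (1-g)^l * norm x"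
  by (rule opnorm_mv_le) (simp add: Mset_def)

lemma term_bound:
  fixes A :: "real^'n^'n" and B :: "real^'m^'n" and K :: "real^'n^'m" and N :: "real^'n^'m"
  assumes stab: "strongly_stable A B K \<kappa> \<gamma>"
    and N: "norm (N *v x) \<le> b * norm x" and g: "\<gamma> < 1"
  shows "norm (mpow (A - B ** K) j ** B ** N *v x) \<le> \<kappa>^2 * (1-\<gamma>)^j * kappaB B * b * norm x"
proof -
  have r0: "0 \<le> (1-\<gamma>)^j" using g by simp
  have kB0: "0 \<le> kappaB B" by (simp add: kappaB_def)
  have "norm (mpow (A - B ** K) j ** B ** N *v x) = norm (mpow (A - B ** K) j *v (B *v (N *v x)))"
    by (simp only: matrix_vector_mul_assoc matrix_mul_assoc)
  also have "\<dots> \<le> \<kappa>^2 * (1-\<gamma>)^j * norm (B *v (N *v x))"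
    by (rule stab_pow[OF stab])
  also have "\<dots> \<le> \<kappa>^2 * (1-\<gamma>)^j * (kappaB B * norm (N *v x))"
    by (intro mult_left_mono kappaB_mv) (use r0 in auto)
  also have "\<dots> \<le> \<kappa>^2 * (1-\<gamma>)^j * (kappaB B * (b * norm x))"
    by (intro mult_left_mono N) (use r0 kB0 in auto)
  finally show ?thesis by (simp only: mult.assoc)
qed

lemma psi_bound:
  fixes A :: "real^'n^'n" and B :: "real^'m^'n" and K :: "real^'n^'m" and M :: "int \<Rightarrow> nat \<Rightarrow> real^'n^'m"
  assumes stab: "strongly_stable A B K \<kappa> \<gamma>"
    and MM: "\<And>j. j \<le> H \<Longrightarrow> M (s - int j) \<in> Mset H (kappaB B) \<kappa> \<gamma>"
    and g: "\<gamma> < 1"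
  shows "norm (Psi A B K H M s H i *v x) \<le> beta (kappaB B) \<kappa> \<gamma> H i * norm x"
proof -
  let ?AK = "A - B ** K"
  let ?r = "1 - \<gamma>"
  have t1: "norm ((if i \<le> H then mpow ?AK i else 0) *v x) \<le> (if i \<le> H then \<kappa>^2 * ?r^i else 0) * norm x"
    by (rule if_bound) (rule stab_pow[OF stab])
  have t2: "norm ((if j < i \<and> i - j \<le> H then mpow ?AK j ** B ** M (s - int j) (i - j - 1) else 0) *v x)
     \<le> (if j < i \<and> i - j \<le> H then \<kappa>^2 * ?r^j * kappaB B * (2 * kappaB B * \<kappa>^3 * ?r^(i-j-1)) else 0) * norm x"
    if j: "j \<in> {0..H}" for j
  proof (rule if_bound)
    assume c: "j < i \<and> i - j \<le> H"
    have "norm (M (s - int j) (i - j - 1) *v x) \<le> (2 * kappaB B * \<kappa>^3 * ?r^(i-j-1)) * norm x"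
      by (rule Mset_mv[OF MM]) (use j c in auto)
    from term_bound[OF stab this g, of j]
    show "norm (mpow ?AK j ** B ** M (s - int j) (i - j - 1) *v x) \<le> \<kappa>^2 * ?r^j * kappaB B * (2 * kappaB B * \<kappa>^3 * ?r^(i-j-1)) * norm x" .
  qed
  have "norm (Psi A B K H M s H i *v x) = norm ((if i \<le> H then mpow ?AK i else 0) *v x +
      (\<Sum>j\<in>{0..H}. (if j < i \<and> i - j \<le> H then mpow ?AK j ** B ** M (s - int j) (i - j - 1) else 0) *v x))"
    unfolding Psi_def by (simp only: matrix_vector_mult_add_rdistrib sum_mv)
  also have "\<dots> \<le> norm ((if i \<le> H then mpow ?AK i else 0) *v x) +
      (\<Sum>j\<in>{0..H}. norm ((if j < i \<and> i - j \<le> H then mpow ?AK j ** B ** M (s - int j) (i - j - 1) else 0) *v x))"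
    by (rule order_trans[OF norm_triangle_ineq add_left_mono[OF norm_sum]])
  also have "\<dots> \<le> (if i \<le> H then \<kappa>^2 * ?r^i else 0) * norm x +
      (\<Sum>j\<in>{0..H}. (if j < i \<and> i - j \<le> H then \<kappa>^2 * ?r^j * kappaB B * (2 * kappaB B * \<kappa>^3 * ?r^(i-j-1)) else 0) * norm x)"
    by (rule add_mono[OF t1 sum_mono[OF t2]])
  also have "\<dots> = beta (kappaB B) \<kappa> \<gamma> H i * norm x"
    unfolding beta_def by (simp only: distrib_right sum_distrib_right)
  finally show ?thesis .
qed

lemma convex_tangent:
  fixes f :: "'a::real_normed_vector \<Rightarrow> real"
  assumes cv: "convex_on UNIV f" and d: "(f has_derivative D) (at p)"
  shows "D (q - p) \<le> f q - f p"
proof -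
  define \<phi> where "\<phi> s = f (p + s *\<^sub>R (q - p))" for s :: real
  have cphi: "convex_on UNIV \<phi>"
  proof (rule convex_onI)
    fix t x y :: real assume t: "0 < t" "t < 1"
    have e: "p + ((1 - t) *\<^sub>R x + t *\<^sub>R y) *\<^sub>R (q - p) = (1 - t) *\<^sub>R (p + x *\<^sub>R (q - p)) + t *\<^sub>R (p + y *\<^sub>R (q - p))"
      by (simp add: algebra_simps)
    show "\<phi> ((1 - t) *\<^sub>R x + t *\<^sub>R y) \<le> (1 - t) * \<phi> x + t * \<phi> y"
      unfolding \<phi>_def e using t by (intro convex_onD[OF cv]) auto
  qed simp
  have lin: "((\<lambda>s. p + s *\<^sub>R (q - p)) has_derivative (\<lambda>s. s *\<^sub>R (q - p))) (at 0)"
    by (auto intro!: derivative_eq_intros)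
  have "(\<phi> has_derivative (\<lambda>s. D (s *\<^sub>R (q - p)))) (at 0)"
    unfolding \<phi>_def
    using has_derivative_compose[OF lin, of f D] d by (simp add: o_def)
  moreover have "D (s *\<^sub>R (q - p)) = s * D (q - p)" for s
    using has_derivative_bounded_linear[OF d] by (simp add: linear_simps)
  ultimately have "(\<phi> has_field_derivative D (q - p)) (at 0)"
    by (simp add: has_field_derivative_def mult.commute[of _ "D (q - p)"])
  then have "\<phi> 1 - \<phi> 0 \<ge> D (q - p) * (1 - 0)"
    by (intro convex_on_imp_above_tangent[OF cphi]) auto
  then show ?thesis by (simp add: \<phi>_def)
qed

lemma A1_diff:
  assumes A1: "assumption_A1 c Gc"
  shows "\<bar>c t x u - c t x' u'\<bar> \<le> Gc * max (norm x * norm (x - x') + norm u * norm (u - u'))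
                                        (norm x' * norm (x - x') + norm u' * norm (u - u'))"
proof -
  let ?f = "\<lambda>p. c t (fst p) (snd p)"
  have cv: "convex_on UNIV ?f" and G: "Gc \<ge> 1" using A1 unfolding assumption_A1_def by auto
  have side: "?f q - ?f p \<le> Gc * (norm (fst q) * norm (fst q - fst p) + norm (snd q) * norm (snd q - snd p))" for p q
  proof -
    have "\<exists>gx gu. (?f has_derivative (\<lambda>h. gx \<bullet> fst h + gu \<bullet> snd h)) (at (fst q, snd q)) \<and>
        norm gx \<le> Gc * norm (fst q) \<and> norm gu \<le> Gc * norm (snd q)"
      using A1 unfolding assumption_A1_def by blast
    then obtain gx gu where g: "(?f has_derivative (\<lambda>h. gx \<bullet> fst h + gu \<bullet> snd h)) (at q)"
        "norm gx \<le> Gc * norm (fst q)" "norm gu \<le> Gc * norm (snd q)"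
      by auto
    have 1: "?f p - ?f q \<ge> gx \<bullet> (fst p - fst q) + gu \<bullet> (snd p - snd q)"
      using convex_tangent[OF cv g(1), of p] by simp
    have 2: "\<bar>gx \<bullet> (fst p - fst q)\<bar> \<le> Gc * norm (fst q) * norm (fst q - fst p)"
      using order_trans[OF Cauchy_Schwarz_ineq2 mult_right_mono[OF g(2) norm_ge_zero], of "fst p - fst q"]
      by (simp add: norm_minus_commute)
    have 3: "\<bar>gu \<bullet> (snd p - snd q)\<bar> \<le> Gc * norm (snd q) * norm (snd q - snd p)"
      using order_trans[OF Cauchy_Schwarz_ineq2 mult_right_mono[OF g(3) norm_ge_zero], of "snd p - snd q"]
      by (simp add: norm_minus_commute)
    show ?thesis using 1 2 3 by (simp only: distrib_left mult.assoc)
  qed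
  have s1: "c t x u - c t x' u' \<le> Gc * (norm x * norm (x - x') + norm u * norm (u - u'))"
    using side[of "(x, u)" "(x', u')"] by simp
  have s2: "c t x' u' - c t x u \<le> Gc * (norm x' * norm (x - x') + norm u' * norm (u - u'))"
    using side[of "(x', u')" "(x, u)"] by (simp add: norm_minus_commute)
  have "0 \<le> Gc" using G by simp
  then show ?thesis using s1 s2
    by (smt (verit) max.cobounded1 max.cobounded2 mult_left_mono)
qed

lemma mmm_diff: "X ** Y ** Z1 *v x - X ** Y ** Z2 *v x = X ** Y ** (Z1 - Z2) *v (x::real^'a)"
  for X :: "real^'n^'n" and Y :: "real^'m^'n" and Z1 Z2 :: "real^'a^'m"
proof -
  have "X ** Y ** (Z1 - Z2) *v x = (X ** Y) *v ((Z1 - Z2) *v x)" by (simp only: matrix_vector_mul_assoc)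
  also have "\<dots> = (X ** Y) *v (Z1 *v x) - (X ** Y) *v (Z2 *v x)"
    by (simp only: matrix_vector_mult_diff_rdistrib matrix_vector_mult_diff_distrib)
  also have "\<dots> = X ** Y ** Z1 *v x - X ** Y ** Z2 *v x" by (simp only: matrix_vector_mul_assoc)
  finally show ?thesis by simp
qed

lemma psi_diff:
  fixes A :: "real^'n^'n" and B :: "real^'m^'n" and K :: "real^'n^'m" and M :: "int \<Rightarrow> nat \<Rightarrow> real^'n^'m"
  assumes stab: "strongly_stable A B K \<kappa> \<gamma>" and g: "\<gamma> < 1"
    and hD: "\<And>l x. l < H \<Longrightarrow> norm ((M e l - Mc l) *v x) \<le> D * norm x" and D0: "0 \<le> D"
    and k1: "1 \<le> \<kappa>" and g0: "0 \<le> \<gamma>"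
  shows "norm (Psi A B K H M s H i *v x - Psi A B K H (M(e := Mc)) s H i *v x)
    \<le> (\<Sum>j\<in>{0..H}. if s - int j = e then \<kappa>^2 * kappaB B * D else 0) * norm x"
proof -
  let ?AK = "A - B ** K"
  define T where "T N j = (if j < i \<and> i - j \<le> H then mpow ?AK j ** B ** N (s - int j) (i - j - 1) else 0) *v x"
    for N :: "int \<Rightarrow> nat \<Rightarrow> real^'n^'m" and j
  have ex: "Psi A B K H N s H i *v x = (if i \<le> H then mpow ?AK i else 0) *v x + (\<Sum>j\<in>{0..H}. T N j)" for N
    unfolding Psi_def T_def by (simp only: matrix_vector_mult_add_rdistrib sum_mv)
  have tj: "norm (T M j - T (M(e := Mc)) j) \<le> (if s - int j = e then \<kappa>^2 * kappaB B * D else 0) * norm x"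
    if j: "j \<in> {0..H}" for j
  proof (cases "s - int j = e")
    case True
    have kB0: "0 \<le> kappaB B" by (simp add: kappaB_def)
    have "norm (T M j - T (M(e := Mc)) j) \<le> \<kappa>^2 * kappaB B * D * norm x"
    proof (cases "j < i \<and> i - j \<le> H")
      case c: True
      have "T M j - T (M(e := Mc)) j = mpow ?AK j ** B ** (M e (i - j - 1) - Mc (i - j - 1)) *v x"
        unfolding T_def using c True by (simp only: if_True fun_upd_same mmm_diff simp_thms)
      also have "norm \<dots> \<le> \<kappa>^2 * (1-\<gamma>)^j * kappaB B * D * norm x"
        by (rule term_bound[OF stab hD g]) (use c in auto)
      also have "\<dots> \<le> \<kappa>^2 * 1 * kappaB B * D * norm x"
        using g g0 kB0 D0 by (intro mult_right_mono mult_left_mono power_le_one) auto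
      finally show ?thesis by simp
    next
      case False
      have "T N j = 0" for N unfolding T_def using False by (simp only: if_False matrix_vector_mult_0)
      then show ?thesis using kB0 D0 by simp
    qed
    then show ?thesis using True by simp
  next
    case False
    then show ?thesis unfolding T_def by simp
  qed
  have "norm (Psi A B K H M s H i *v x - Psi A B K H (M(e := Mc)) s H i *v x) =
        norm (\<Sum>j\<in>{0..H}. T M j - T (M(e := Mc)) j)"
    by (simp only: ex sum_subtractf) simp
  also have "\<dots> \<le> (\<Sum>j\<in>{0..H}. norm (T M j - T (M(e := Mc)) j))" by (rule norm_sum)
  also have "\<dots> \<le> (\<Sum>j\<in>{0..H}. (if s - int j = e then \<kappa>^2 * kappaB B * D else 0) * norm x)"
    by (rule sum_mono[OF tj])
  also have "\<dots> = (\<Sum>j\<in>{0..H}. if s - int j = e then \<kappa>^2 * kappaB B * D else 0) * norm x"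
    by (simp only: sum_distrib_right)
  finally show ?thesis .
qed

lemma sum_ind_le:
  assumes "0 \<le> (c::real)"
  shows "(\<Sum>j\<in>{0..H}. if s - int j = e then c else 0) \<le> c"
proof -
  have "(\<Sum>j\<in>{0..H}. if s - int j = e then c else 0) = (\<Sum>j\<in>{j\<in>{0..H}. s - int j = e}. c)"
    by (rule sum.inter_filter[symmetric]) simp
  also have "\<dots> = card {j\<in>{0..H}. s - int j = e} * c" by simp
  also have "card {j\<in>{0..H}. s - int j = e} \<le> 1"
  proof -
    have "{j\<in>{0..H}. s - int j = e} \<subseteq> {nat (s - e)}" by auto
    from card_mono[OF _ this] show ?thesis by simp
  qed
  then have "card {j\<in>{0..H}. s - int j = e} * c \<le> 1 * c" using assms by (intro mult_right_mono) auto
  finally show ?thesis by simp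
qed

lemma K_mv: "strongly_stable A B K \<kappa> \<gamma> \<Longrightarrow> norm (K *v x) \<le> \<kappa> * norm x"
  by (rule opnorm_mv_le) (auto simp: strongly_stable_def)

lemma y_bound:
  fixes A :: "real^'n^'n" and B :: "real^'m^'n" and K :: "real^'n^'m" and M :: "int \<Rightarrow> nat \<Rightarrow> real^'n^'m"
  assumes stab: "strongly_stable A B K \<kappa> \<gamma>" and g: "\<gamma> < 1"
    and MM: "\<And>j. j \<le> H \<Longrightarrow> M (tt - 1 - int j) \<in> Mset H (kappaB B) \<kappa> \<gamma>"
  shows "norm (ysur A B K H M z tt) \<le> (\<Sum>i\<in>{0..2*H}. beta (kappaB B) \<kappa> \<gamma> H i * norm (z (tt - 1 - int i)))"
proof -
  have "norm (ysur A B K H M z tt) \<le> (\<Sum>i\<in>{0..2*H}. norm (Psi A B K H M (tt - 1) H i *v z (tt - 1 - int i)))"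
    unfolding ysur_def by (rule norm_sum)
  also have "\<dots> \<le> (\<Sum>i\<in>{0..2*H}. beta (kappaB B) \<kappa> \<gamma> H i * norm (z (tt - 1 - int i)))"
    by (intro sum_mono psi_bound[OF stab _ g]) (use MM in auto)
  finally show ?thesis .
qed

lemma v_bound:
  fixes A :: "real^'n^'n" and B :: "real^'m^'n" and K :: "real^'n^'m" and M :: "int \<Rightarrow> nat \<Rightarrow> real^'n^'m"
  assumes stab: "strongly_stable A B K \<kappa> \<gamma>" and g: "\<gamma> < 1" and k0: "0 \<le> \<kappa>"
    and Mt: "M tt \<in> Mset H (kappaB B) \<kappa> \<gamma>"
    and y: "norm (ysur A B K H M z tt) \<le> Y"
  shows "norm (vsur A B K H M z tt) \<le> \<kappa> * Y + (\<Sum>i\<in>{1..H}. 2 * kappaB B * \<kappa>^3 * (1-\<gamma>)^(i-1) * norm (z (tt - int i)))"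
proof -
  have "norm (vsur A B K H M z tt) \<le> norm (K *v ysur A B K H M z tt) + norm (\<Sum>i\<in>{1..H}. M tt (i - 1) *v z (tt - int i))"
    unfolding vsur_def by (rule order_trans[OF norm_triangle_ineq add_mono[OF eq_refl[OF norm_minus_cancel] order_refl]])
  also have "\<dots> \<le> \<kappa> * Y + (\<Sum>i\<in>{1..H}. 2 * kappaB B * \<kappa>^3 * (1-\<gamma>)^(i-1) * norm (z (tt - int i)))"
  proof (rule add_mono)
    show "norm (K *v ysur A B K H M z tt) \<le> \<kappa> * Y"
      using K_mv[OF stab] y k0 by (meson mult_left_mono order_trans)
    show "norm (\<Sum>i\<in>{1..H}. M tt (i - 1) *v z (tt - int i)) \<le> (\<Sum>i\<in>{1..H}. 2 * kappaB B * \<kappa>^3 * (1-\<gamma>)^(i-1) * norm (z (tt - int i)))"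
      by (rule order_trans[OF norm_sum sum_mono]) (rule Mset_mv[OF Mt], auto)
  qed
  finally show ?thesis .
qed

lemma dy_bound:
  fixes A :: "real^'n^'n" and B :: "real^'m^'n" and K :: "real^'n^'m" and M :: "int \<Rightarrow> nat \<Rightarrow> real^'n^'m"
  assumes stab: "strongly_stable A B K \<kappa> \<gamma>" and g: "\<gamma> < 1"
    and hD: "\<And>l x. l < H \<Longrightarrow> norm ((M e l - Mc l) *v x) \<le> D * norm x" and D0: "0 \<le> D"
    and k1: "1 \<le> \<kappa>" and g0: "0 \<le> \<gamma>"
  shows "norm (ysur A B K H M z tt - ysur A B K H (M(e := Mc)) z tt) \<le> \<kappa>^2 * kappaB B * D * (\<Sum>i\<in>{0..2*H}. norm (z (tt - 1 - int i)))"
proof -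
  have c0: "0 \<le> \<kappa>^2 * kappaB B * D" using D0 by (simp add: kappaB_def)
  have "norm (ysur A B K H M z tt - ysur A B K H (M(e := Mc)) z tt) =
     norm (\<Sum>i\<in>{0..2*H}. Psi A B K H M (tt - 1) H i *v z (tt - 1 - int i) - Psi A B K H (M(e := Mc)) (tt - 1) H i *v z (tt - 1 - int i))"
    unfolding ysur_def by (simp only: sum_subtractf)
  also have "\<dots> \<le> (\<Sum>i\<in>{0..2*H}. norm (Psi A B K H M (tt - 1) H i *v z (tt - 1 - int i) - Psi A B K H (M(e := Mc)) (tt - 1) H i *v z (tt - 1 - int i)))"
    by (rule norm_sum)
  also have "\<dots> \<le> (\<Sum>i\<in>{0..2*H}. (\<kappa>^2 * kappaB B * D) * norm (z (tt - 1 - int i)))"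
  proof (rule sum_mono)
    fix i
    show "norm (Psi A B K H M (tt - 1) H i *v z (tt - 1 - int i) - Psi A B K H (M(e := Mc)) (tt - 1) H i *v z (tt - 1 - int i))
       \<le> (\<kappa>^2 * kappaB B * D) * norm (z (tt - 1 - int i))"
      by (rule order_trans[OF psi_diff[where M=M and e=e and Mc=Mc and D=D and H=H, OF stab g hD D0 k1 g0] mult_right_mono[OF sum_ind_le[OF c0] norm_ge_zero]])
  qed
  also have "\<dots> = \<kappa>^2 * kappaB B * D * (\<Sum>i\<in>{0..2*H}. norm (z (tt - 1 - int i)))"
    by (simp only: sum_distrib_left)
  finally show ?thesis .
qed

lemma dv_bound:
  fixes A :: "real^'n^'n" and B :: "real^'m^'n" and K :: "real^'n^'m" and M :: "int \<Rightarrow> nat \<Rightarrow> real^'n^'m"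
  assumes stab: "strongly_stable A B K \<kappa> \<gamma>"
    and hD: "\<And>l x. l < H \<Longrightarrow> norm ((M e l - Mc l) *v x) \<le> D * norm x" and D0: "0 \<le> D"
    and k0: "0 \<le> \<kappa>"
  shows "norm (vsur A B K H M z tt - vsur A B K H (M(e := Mc)) z tt) \<le>
     \<kappa> * norm (ysur A B K H M z tt - ysur A B K H (M(e := Mc)) z tt) + D * (\<Sum>i\<in>{1..H}. norm (z (tt - int i)))"
proof -
  let ?y = "ysur A B K H M z tt" and ?y' = "ysur A B K H (M(e := Mc)) z tt"
  have "norm (vsur A B K H M z tt - vsur A B K H (M(e := Mc)) z tt) =
     norm (- (K *v (?y - ?y')) + (\<Sum>i\<in>{1..H}. M tt (i - 1) *v z (tt - int i) - (M(e := Mc)) tt (i - 1) *v z (tt - int i)))"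
    unfolding vsur_def by (simp add: sum_subtractf matrix_vector_mult_diff_distrib algebra_simps)
  also have "\<dots> \<le> norm (K *v (?y - ?y')) + (\<Sum>i\<in>{1..H}. norm (M tt (i - 1) *v z (tt - int i) - (M(e := Mc)) tt (i - 1) *v z (tt - int i)))"
    by (rule order_trans[OF norm_triangle_ineq add_mono[OF eq_refl[OF norm_minus_cancel] norm_sum]])
  also have "\<dots> \<le> \<kappa> * norm (?y - ?y') + (\<Sum>i\<in>{1..H}. D * norm (z (tt - int i)))"
  proof (rule add_mono[OF K_mv[OF stab] sum_mono])
    fix i assume i: "i \<in> {1..H}"
    show "norm (M tt (i - 1) *v z (tt - int i) - (M(e := Mc)) tt (i - 1) *v z (tt - int i)) \<le> D * norm (z (tt - int i))"
    proof (cases "tt = e")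
      case True
      have "i - 1 < H" using i by auto
      from hD[OF this, of "z (tt - int i)"] True show ?thesis
        by (simp add: matrix_vector_mult_diff_rdistrib)
    next
      case False
      then show ?thesis using D0 by simp
    qed
  qed
  also have "\<dots> = \<kappa> * norm (?y - ?y') + D * (\<Sum>i\<in>{1..H}. norm (z (tt - int i)))"
    by (simp only: sum_distrib_left)
  finally show ?thesis .
qed

lemma geom_fin:
  assumes "0 \<le> (r::real)" "r < 1" "finite F"
  shows "(\<Sum>l\<in>F. r^l) \<le> 1 / (1 - r)"
proof -
  obtain n where n: "F \<subseteq> {..<n}" using assms(3) finite_nat_iff_bounded by blast
  have "(\<Sum>l\<in>F. r^l) \<le> (\<Sum>l<n. r^l)"
    by (rule sum_mono2) (use n assms in auto)
  also have "\<dots> = (1 - r^n) / (1 - r)" using assms by (simp add: sum_gp_strict)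
  also have "\<dots> \<le> 1 / (1 - r)" using assms by (simp add: divide_right_mono)
  finally show ?thesis .
qed

lemma geom_inj:
  assumes "0 \<le> (r::real)" "r < 1" "finite F" "inj_on f F"
  shows "(\<Sum>i\<in>F. r^(f i)) \<le> 1 / (1 - r)"
proof -
  have "(\<Sum>i\<in>F. r^(f i)) = (\<Sum>l\<in>f ` F. r^l)" using sum.reindex[OF assms(4), of "\<lambda>l. r^l"] by simp
  also have "\<dots> \<le> 1 / (1 - r)" using assms by (intro geom_fin) auto
  finally show ?thesis .
qed

lemma inner_geo:
  assumes "0 \<le> (r::real)" "r < 1" "finite I"
  shows "(\<Sum>i\<in>I. if j < i \<and> P i then r^(i-j-1) else 0) \<le> 1 / (1 - r)"
proof -
  have "(\<Sum>i\<in>I. if j < i \<and> P i then r^(i-j-1) else 0) = (\<Sum>i\<in>{i\<in>I. j < i \<and> P i}. r^(i-j-1))"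
    by (rule sum.inter_filter[symmetric]) (use assms in simp)
  also have "\<dots> \<le> 1 / (1 - r)"
    by (rule geom_inj) (use assms in \<open>auto simp: inj_on_def\<close>)
  finally show ?thesis .
qed

lemma beta_sum:
  assumes g: "0 < \<gamma>" "\<gamma> < 1" and kB: "0 \<le> kB" and k: "0 \<le> k"
  shows "(\<Sum>i\<in>{0..2*H}. beta kB k \<gamma> H i) \<le> k^2 / \<gamma> + 2 * kB^2 * k^5 / \<gamma>^2"
proof -
  let ?r = "1 - \<gamma>"
  have r: "0 \<le> ?r" "?r < 1" using g by auto
  have 1: "(\<Sum>i\<in>{0..2*H}. if i \<le> H then k^2 * ?r^i else 0) \<le> k^2 / \<gamma>"
  proof -
    have "(\<Sum>i\<in>{0..2*H}. if i \<le> H then k^2 * ?r^i else 0) \<le> (\<Sum>i\<in>{0..2*H}. k^2 * ?r^i)"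
      by (rule sum_mono) (use r in auto)
    also have "\<dots> = k^2 * (\<Sum>i\<in>{0..2*H}. ?r^i)" by (simp add: sum_distrib_left)
    also have "\<dots> \<le> k^2 * (1 / (1 - ?r))" by (intro mult_left_mono geom_fin r) auto
    finally show ?thesis by simp
  qed
  have e: "(if j < i \<and> i - j \<le> H then k^2 * ?r^j * kB * (2 * kB * k^3 * ?r^(i-j-1)) else 0)
      = (2 * kB^2 * k^5 * ?r^j) * (if j < i \<and> i - j \<le> H then ?r^(i-j-1) else 0)" for i j
    by (simp add: power2_eq_square power3_eq_cube eval_nat_numeral)
  have 2: "(\<Sum>i\<in>{0..2*H}. \<Sum>j\<in>{0..H}. if j < i \<and> i - j \<le> H then k^2 * ?r^j * kB * (2 * kB * k^3 * ?r^(i-j-1)) else 0)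
      \<le> 2 * kB^2 * k^5 / \<gamma>^2"
  proof -
    have "(\<Sum>i\<in>{0..2*H}. \<Sum>j\<in>{0..H}. if j < i \<and> i - j \<le> H then k^2 * ?r^j * kB * (2 * kB * k^3 * ?r^(i-j-1)) else 0)
       = (\<Sum>j\<in>{0..H}. (2 * kB^2 * k^5 * ?r^j) * (\<Sum>i\<in>{0..2*H}. if j < i \<and> i - j \<le> H then ?r^(i-j-1) else 0))"
      by (subst sum.swap) (simp only: e sum_distrib_left)
    also have "\<dots> \<le> (\<Sum>j\<in>{0..H}. (2 * kB^2 * k^5 * ?r^j) * (1 / \<gamma>))"
      by (intro sum_mono mult_left_mono) (use inner_geo[OF r] kB k r in auto)
    also have "\<dots> = 2 * kB^2 * k^5 / \<gamma> * (\<Sum>j\<in>{0..H}. ?r^j)"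
      by (simp only: sum_distrib_left) (simp add: mult_ac)
    also have "\<dots> \<le> 2 * kB^2 * k^5 / \<gamma> * (1 / \<gamma>)"
      using geom_fin[OF r, of "{0..H}"] kB k g by (intro mult_left_mono) auto
    finally show ?thesis by (simp add: power2_eq_square)
  qed
  have "(\<Sum>i\<in>{0..2*H}. beta kB k \<gamma> H i) = (\<Sum>i\<in>{0..2*H}. if i \<le> H then k^2 * ?r^i else 0) +
     (\<Sum>i\<in>{0..2*H}. \<Sum>j\<in>{0..H}. if j < i \<and> i - j \<le> H then k^2 * ?r^j * kB * (2 * kB * k^3 * ?r^(i-j-1)) else 0)"
    unfolding beta_def by (simp only: sum.distrib)
  then show ?thesis using 1 2 by linarith
qed

lemma meas_mv[measurable (raw)]:
  fixes X :: "real^'n^'m"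
  shows "f \<in> borel_measurable M \<Longrightarrow> (\<lambda>x. X *v f x) \<in> borel_measurable M"
  by (rule borel_measurable_continuous_on[where f="\<lambda>v. X *v v"])
     (auto intro!: linear_continuous_on)

lemma meas_wext:
  assumes "\<And>s. w s \<in> borel_measurable M"
  shows "(\<lambda>\<omega>. wext (\<lambda>r. w r \<omega>) s) \<in> borel_measurable M"
  unfolding wext_def using assms by (cases "s < 0") auto

lemma meas_ysur:
  fixes A :: "real^'n^'n" and B :: "real^'m^'n" and K :: "real^'n^'m" and w :: "nat \<Rightarrow> 'w \<Rightarrow> real^'n"
  assumes "\<And>s. w s \<in> borel_measurable M'"
  shows "(\<lambda>\<omega>. ysur A B K H M (wext (\<lambda>r. w r \<omega>)) tt) \<in> borel_measurable M'"
  unfolding ysur_def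
  by (intro borel_measurable_sum meas_mv meas_wext assms)

lemma meas_vsur:
  fixes A :: "real^'n^'n" and B :: "real^'m^'n" and K :: "real^'n^'m" and w :: "nat \<Rightarrow> 'w \<Rightarrow> real^'n"
  assumes "\<And>s. w s \<in> borel_measurable M'"
  shows "(\<lambda>\<omega>. vsur A B K H M (wext (\<lambda>r. w r \<omega>)) tt) \<in> borel_measurable M'"
  unfolding vsur_def
  by (intro borel_measurable_add borel_measurable_uminus borel_measurable_sum meas_mv meas_wext assms meas_ysur)

lemma A1_cont:
  fixes c :: "nat \<Rightarrow> real^'n \<Rightarrow> real^'m \<Rightarrow> real"
  assumes "assumption_A1 c Gc" shows "continuous_on UNIV (\<lambda>p. c t (fst p) (snd p))"
proof (rule continuous_at_imp_continuous_on, intro ballI)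
  fix p :: "(real^'n) \<times> (real^'m)"
  obtain gx gu where "((\<lambda>p. c t (fst p) (snd p)) has_derivative (\<lambda>h. gx \<bullet> fst h + gu \<bullet> snd h)) (at (fst p, snd p))"
    using assms unfolding assumption_A1_def by blast
  then show "isCont (\<lambda>p. c t (fst p) (snd p)) p" using has_derivative_continuous by simp
qed

lemma meas_F:
  fixes A :: "real^'n^'n" and B :: "real^'m^'n" and K :: "real^'n^'m" and w :: "nat \<Rightarrow> 'w \<Rightarrow> real^'n"
  assumes "\<And>s. w s \<in> borel_measurable M'" and A1: "assumption_A1 c Gc"
  shows "(\<lambda>\<omega>. Fsur c A B K H M (wext (\<lambda>r. w r \<omega>)) t) \<in> borel_measurable M'"
proof -
  have p: "(\<lambda>\<omega>. (ysur A B K H M (wext (\<lambda>r. w r \<omega>)) (int t), vsur A B K H M (wext (\<lambda>r. w r \<omega>)) (int t))) \<in> borel_measurable M'"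
    unfolding borel_prod[symmetric]
    by (intro measurable_Pair meas_ysur meas_vsur assms)
  show ?thesis unfolding Fsur_def
    using borel_measurable_continuous_on[OF A1_cont[OF A1] p] by simp
qed

lemma beta_nonneg: "0 \<le> kB \<Longrightarrow> 0 \<le> k \<Longrightarrow> \<gamma> \<le> 1 \<Longrightarrow> 0 \<le> beta kB k \<gamma> H i"
  unfolding beta_def by (intro add_nonneg_nonneg sum_nonneg) auto

lemma kappa_ge1:
  fixes A :: "real^'n^'n" and B :: "real^'m^'n" and K :: "real^'n^'m"
  assumes "strongly_stable A B K \<kappa> \<gamma>"
  shows "1 \<le> \<kappa>"
proof -
  obtain P Q Qi :: "complex^'n^'n" where h: "Q ** Qi = mat 1"
     "opnorm K \<le> \<kappa>" "opnorm Q \<le> \<kappa>" "opnorm Qi \<le> \<kappa>"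
    using assms unfolding strongly_stable_def by blast
  have k0: "0 \<le> \<kappa>" using h(2) opnorm_nonneg[of K] by linarith
  obtain i :: 'n where True by blast
  let ?x = "axis i (1::complex)"
  have nx: "norm ?x = 1" by simp
  have "?x = Q *v (Qi *v ?x)" by (simp add: matrix_vector_mul_assoc h(1))
  then have "norm ?x \<le> \<kappa> * norm (Qi *v ?x)" by (metis opnorm_mv_le h(3))
  also have "\<dots> \<le> \<kappa> * (\<kappa> * norm ?x)" by (intro mult_left_mono opnorm_mv_le h(4) k0)
  finally have "1 \<le> \<kappa> * \<kappa>" using nx by simp
  with k0 show ?thesis using mult_left_mono[of \<kappa> 1 \<kappa>] by force
qed

lemma markov:
  assumes P: "prob_space \<Omega>" and u: "integrable \<Omega> u" and nn: "\<And>x. 0 \<le> u x" and c: "0 < c"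
    and b: "(\<integral>x. u x \<partial>\<Omega>) \<le> b"
  shows "measure \<Omega> {x\<in>space \<Omega>. u x \<ge> c} \<le> b / c"
proof -
  have "measure \<Omega> {x\<in>space \<Omega>. u x \<ge> c} \<le> (\<integral>x. u x \<partial>\<Omega>) / c"
    by (rule integral_Markov_inequality_measure[OF u, of "space \<Omega>"]) (use nn c in auto)
  also have "\<dots> \<le> b / c" using b c by (simp add: divide_right_mono)
  finally show ?thesis .
qed

lemma wnorm:
  assumes w_int: "\<And>s. integrable \<Omega> (\<lambda>\<omega>. norm (w s \<omega>))"
    and A2: "\<And>s. (\<integral>\<omega>. norm (w s \<omega>) \<partial>\<Omega>) \<le> \<sigma>w" and s0: "0 \<le> \<sigma>w"
  shows "integrable \<Omega> (\<lambda>\<omega>. norm (wext (\<lambda>r. w r \<omega>) s))"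
    "(\<integral>\<omega>. norm (wext (\<lambda>r. w r \<omega>) s) \<partial>\<Omega>) \<le> \<sigma>w"
  using w_int A2 s0 unfolding wext_def by (cases "s < 0"; simp)+

lemma le_mult_ge1: "0 \<le> (x::real) \<Longrightarrow> 1 \<le> m \<Longrightarrow> x \<le> x * m"
  using mult_left_mono[of 1 m x] by simp

lemma le_div_le1: "0 \<le> (X::real) \<Longrightarrow> 0 < d \<Longrightarrow> d \<le> 1 \<Longrightarrow> X \<le> X / d"
  by (simp add: le_divide_eq mult_left_le)

lemma ge1_mult: "1 \<le> (x::real) \<Longrightarrow> 1 \<le> y \<Longrightarrow> 1 \<le> x * y"
  using mult_mono[of 1 x 1 y] by simp

lemma final_arith:
  fixes \<kappa> kB \<gamma> \<sigma> C L R h :: real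
  assumes k: "1 \<le> \<kappa>" and b: "1 \<le> kB" and g: "0 < \<gamma>" "\<gamma> < 1" and s: "0 \<le> \<sigma>" and C: "0 < C"
    and L: "1 \<le> L" and R: "1 \<le> R" and h: "h \<le> 2 / \<gamma> * L + 1"
  shows "2 * (\<sigma> * (\<kappa> * (\<kappa>^2 / \<gamma> + 2 * kB^2 * \<kappa>^5 / \<gamma>^2) + 2 * kB * \<kappa>^3 / \<gamma>)) / C
         + \<sigma> * (3 * h + 1) / (C * L * R / (\<kappa>^3 * kB))
       \<le> 30 * \<sigma> * kB^2 * \<kappa>^6 / (C * \<gamma>^2 * (1 - \<gamma>))"
proof -
  define q where "q = 1 / \<gamma>"
  have q1: "1 \<le> q" using g by (simp add: q_def)
  have a3: "1 \<le> \<kappa>^3" using k by simp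
  have P: "0 \<le> kB^2 * \<kappa>^6 * q^2" using b by simp
  have e1: "\<kappa> * (\<kappa>^2 / \<gamma> + 2 * kB^2 * \<kappa>^5 / \<gamma>^2) + 2 * kB * \<kappa>^3 / \<gamma>
        = \<kappa>^3 * q + 2 * (kB^2 * \<kappa>^6 * q^2) + 2 * (kB * \<kappa>^3 * q)"
  proof -
    have "\<kappa> * (\<kappa>^2 / \<gamma>) = \<kappa>^3 * q" by (simp add: q_def power2_eq_square power3_eq_cube)
    moreover have "\<kappa> * (2 * kB^2 * \<kappa>^5 / \<gamma>^2) = 2 * (kB^2 * \<kappa>^6 * q^2)"
      by (simp add: q_def eval_nat_numeral power_divide)
    moreover have "2 * kB * \<kappa>^3 / \<gamma> = 2 * (kB * \<kappa>^3 * q)" by (simp add: q_def)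
    ultimately show ?thesis by (simp add: distrib_left)
  qed
  have i1: "\<kappa>^3 * q \<le> kB^2 * \<kappa>^6 * q^2"
  proof -
    have n: "0 \<le> \<kappa>^3 * q" using k q1 by simp
    have m: "1 \<le> kB^2 * \<kappa>^3 * q" using k q1 b by (intro ge1_mult one_le_power)
    have "\<kappa>^3 * q \<le> (\<kappa>^3 * q) * (kB^2 * \<kappa>^3 * q)" by (rule le_mult_ge1[OF n m])
    then show ?thesis by (simp add: power2_eq_square eval_nat_numeral mult_ac)
  qed
  have i2: "kB * \<kappa>^3 * q \<le> kB^2 * \<kappa>^6 * q^2"
  proof -
    have m: "1 \<le> kB * \<kappa>^3 * q" using k q1 b by (intro ge1_mult one_le_power)
    have "kB * \<kappa>^3 * q \<le> (kB * \<kappa>^3 * q) * (kB * \<kappa>^3 * q)" by (rule le_mult_ge1) (use m in auto)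
    then show ?thesis by (simp add: power2_eq_square eval_nat_numeral mult_ac)
  qed
  have T1: "2 * (\<sigma> * (\<kappa> * (\<kappa>^2 / \<gamma> + 2 * kB^2 * \<kappa>^5 / \<gamma>^2) + 2 * kB * \<kappa>^3 / \<gamma>)) / C
      \<le> 10 * \<sigma> * (kB^2 * \<kappa>^6 * q^2) / C"
  proof -
    have "\<kappa>^3 * q + 2 * (kB^2 * \<kappa>^6 * q^2) + 2 * (kB * \<kappa>^3 * q) \<le> 5 * (kB^2 * \<kappa>^6 * q^2)"
      using i1 i2 by linarith
    then have "2 * (\<sigma> * (\<kappa>^3 * q + 2 * (kB^2 * \<kappa>^6 * q^2) + 2 * (kB * \<kappa>^3 * q))) \<le> 2 * (\<sigma> * (5 * (kB^2 * \<kappa>^6 * q^2)))"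
      using s by (intro mult_left_mono) auto
    then show ?thesis unfolding e1 using C by (intro divide_right_mono) auto
  qed
  have T2: "\<sigma> * (3 * h + 1) / (C * L * R / (\<kappa>^3 * kB)) \<le> 10 * \<sigma> * (kB^2 * \<kappa>^6 * q^2) / C"
  proof -
    have "3 * h + 1 \<le> 6 * q * L + 4" using h by (simp add: q_def)
    also have "\<dots> \<le> 10 * q * L" using q1 L
      using mult_mono[of 1 q 1 L] by (simp add: mult.commute)
    finally have hh: "3 * h + 1 \<le> 10 * q * L" .
    have LR: "L \<le> L * R" using L R by (intro le_mult_ge1) auto
    have "\<sigma> * (3 * h + 1) / (C * L * R / (\<kappa>^3 * kB)) = \<sigma> * (3 * h + 1) * (\<kappa>^3 * kB) / (C * (L * R))"
      by (simp add: mult_ac)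
    also have "\<dots> \<le> \<sigma> * (10 * q * L) * (\<kappa>^3 * kB) / (C * L)"
    proof (rule frac_le)
      show "0 \<le> \<sigma> * (10 * q * L) * (\<kappa>^3 * kB)" using s q1 L k b by simp
      show "\<sigma> * (3 * h + 1) * (\<kappa>^3 * kB) \<le> \<sigma> * (10 * q * L) * (\<kappa>^3 * kB)"
        using hh s k b by (intro mult_right_mono mult_left_mono) auto
      show "0 < C * L" using C L by simp
      show "C * L \<le> C * (L * R)" using C LR by simp
    qed
    also have "\<dots> = 10 * \<sigma> * (kB * \<kappa>^3 * q) / C" using L by (simp add: mult_ac)
    also have "\<dots> \<le> 10 * \<sigma> * (kB^2 * \<kappa>^6 * q^2) / C"
      using i2 s C by (intro divide_right_mono mult_left_mono) auto
    finally show ?thesis .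
  qed
  have "20 * \<sigma> * (kB^2 * \<kappa>^6 * q^2) / C \<le> 30 * \<sigma> * (kB^2 * \<kappa>^6 * q^2) / C / (1 - \<gamma>)"
  proof -
    have "20 * \<sigma> * (kB^2 * \<kappa>^6 * q^2) / C \<le> 30 * \<sigma> * (kB^2 * \<kappa>^6 * q^2) / C"
      using s P C by (intro divide_right_mono mult_right_mono) auto
    also have "\<dots> \<le> 30 * \<sigma> * (kB^2 * \<kappa>^6 * q^2) / C / (1 - \<gamma>)"
      by (rule le_div_le1) (use s P C g in auto)
    finally show ?thesis .
  qed
  moreover have "30 * \<sigma> * (kB^2 * \<kappa>^6 * q^2) / C / (1 - \<gamma>) = 30 * \<sigma> * kB^2 * \<kappa>^6 / (C * \<gamma>^2 * (1 - \<gamma>))"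
    using g by (simp add: q_def power_divide mult_ac)
  ultimately show ?thesis using T1 T2 by linarith
qed

lemma frob_comp: "l < H \<Longrightarrow> norm (X l) \<le> frob H X"
proof -
  assume l: "l < H"
  have "(norm (X l))^2 \<le> (\<Sum>i<H. (norm (X i))^2)"
    by (rule member_le_sum[of l "{..<H}" "\<lambda>i. (norm (X i))^2"]) (use l in auto)
  then have "sqrt ((norm (X l))^2) \<le> sqrt (\<Sum>i<H. (norm (X i))^2)" by (rule real_sqrt_le_mono)
  then show ?thesis by (simp add: frob_def)
qed

theorem lemma3:
  fixes A :: "real^'n^'n" and B :: "real^'m^'n" and K :: "real^'n^'m"
    and c :: "nat \<Rightarrow> real^'n \<Rightarrow> real^'m \<Rightarrow> real" and Gc :: real
    and \<Omega> :: "'w measure" and w :: "nat \<Rightarrow> 'w \<Rightarrow> real^'n" and \<sigma>w :: real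
    and \<kappa> \<gamma> :: real and T t k H :: nat and C :: real
    and M :: "int \<Rightarrow> nat \<Rightarrow> real^'n^'m" and Mc :: "nat \<Rightarrow> real^'n^'m"
  assumes A1: "assumption_A1 c Gc"
    and P: "prob_space \<Omega>"
    and w_meas: "\<And>s. w s \<in> borel_measurable \<Omega>"
    and w_int: "\<And>s. integrable \<Omega> (\<lambda>\<omega>. norm (w s \<omega>))"
    and A2: "\<And>s. (\<integral>\<omega>. norm (w s \<omega>) \<partial>\<Omega>) \<le> \<sigma>w"
    and stab: "strongly_stable A B K \<kappa> \<gamma>"
    and gam: "0 < \<gamma>" "\<gamma> < 1"
    and H_def: "H = nat \<lceil>2 / \<gamma> * ln (real T)\<rceil>"
    and T3: "T \<ge> 3" and tT: "t \<le> T - 1" and kH: "k \<le> H + 1" and C: "C > 0"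
    and MM: "\<And>s. int t - 1 - int H \<le> s \<Longrightarrow> s \<le> int t \<Longrightarrow> M s \<in> Mset H (kappaB B) \<kappa> \<gamma>"
    and McM: "Mc \<in> Mset H (kappaB B) \<kappa> \<gamma>"
  shows "measure \<Omega> {\<omega> \<in> space \<Omega>.
             \<bar>Fsur c A B K H M (wext (\<lambda>r. w r \<omega>)) t
              - Fsur c A B K H (M(int t - int k := Mc)) (wext (\<lambda>r. w r \<omega>)) t\<bar>
             \<le> 2 * Gc * C^2 * ln (real T) * (2 / \<gamma> * ln (real T) + 1) powr (1/2)
                * frob H (\<lambda>i. M (int t - int k) i - Mc i)}
         \<ge> 1 - 30 * \<sigma>w * (kappaB B)^2 * \<kappa>^6 / (C * \<gamma>^2 * (1 - \<gamma>))"
proof -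
  interpret prob_space \<Omega> by (rule P)
  define kB where "kB = kappaB B"
  define e where "e = int t - int k"
  define M' where "M' = M(e := Mc)"
  define D where "D = frob H (\<lambda>i. M e i - Mc i)"
  define L where "L = ln (real T)"
  define R where "R = (2 / \<gamma> * ln (real T) + 1) powr (1/2)"
  define nz where "nz s \<omega> = norm (wext (\<lambda>r. w r \<omega>) s)" for s \<omega>
  define Y where "Y \<omega> = (\<Sum>i\<in>{0..2*H}. beta kB \<kappa> \<gamma> H i * nz (int t - 1 - int i) \<omega>)" for \<omega>
  define V where "V \<omega> = \<kappa> * Y \<omega> + (\<Sum>i\<in>{1..H}. 2 * kB * \<kappa>^3 * (1-\<gamma>)^(i-1) * nz (int t - int i) \<omega>)" for \<omega>
  define S0 where "S0 \<omega> = (\<Sum>i\<in>{0..2*H}. nz (int t - 1 - int i) \<omega>)" for \<omega>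
  define S1 where "S1 \<omega> = (\<Sum>i\<in>{1..H}. nz (int t - int i) \<omega>)" for \<omega>
  define S where "S \<omega> = S0 \<omega> + S1 \<omega>" for \<omega>
  define thr where "thr = C * L * R / (\<kappa>^3 * kB)"
  define F where "F N \<omega> = Fsur c A B K H N (wext (\<lambda>r. w r \<omega>)) t" for N \<omega>
  define G where "G = 2 * Gc * C^2 * L * R * D"
  have k1: "1 \<le> \<kappa>" by (rule kappa_ge1[OF stab])
  have kB1: "1 \<le> kB" by (simp add: kB_def kappaB_def)
  have G1: "1 \<le> Gc" using A1 by (simp add: assumption_A1_def)
  have s0: "0 \<le> \<sigma>w"
  proof -
    have "0 \<le> (\<integral>\<omega>. norm (w 0 \<omega>) \<partial>\<Omega>)" by simp
    then show ?thesis using A2[of 0] by linarith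
  qed
  have L1: "1 \<le> L"
  proof -
    have "ln (exp 1) \<le> ln (real T)" using T3 exp_le by (subst ln_le_cancel_iff) auto
    then show ?thesis by (simp add: L_def)
  qed
  have R1: "1 \<le> R" unfolding R_def
    by (rule ge_one_powr_ge_zero) (use L1 gam in \<open>auto simp: L_def\<close>)
  have Hb: "real H \<le> 2 / \<gamma> * L + 1"
  proof -
    have nn: "0 \<le> 2 / \<gamma> * L" using L1 gam by simp
    have "real H = real_of_int \<lceil>2 / \<gamma> * L\<rceil>" using nn by (simp add: H_def L_def)
    also have "\<dots> \<le> 2 / \<gamma> * L + 1" by (rule of_int_ceiling_le_add_one)
    finally show ?thesis .
  qed
  have D0: "0 \<le> D" unfolding D_def frob_def by (intro real_sqrt_ge_zero sum_nonneg) auto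
  have hD: "norm ((M e l - Mc l) *v x) \<le> D * norm x" if "l < H" for l x
    using order_trans[OF frob_mv mult_right_mono[OF frob_comp[OF that] norm_ge_zero]]
    by (simp add: D_def)
  have MMy: "M (int t - 1 - int j) \<in> Mset H (kappaB B) \<kappa> \<gamma>" if "j \<le> H" for j
    using that by (intro MM) auto
  have MM'y: "M' (int t - 1 - int j) \<in> Mset H (kappaB B) \<kappa> \<gamma>" if "j \<le> H" for j
    using that McM MMy by (simp add: M'_def)
  have Mt: "M (int t) \<in> Mset H (kappaB B) \<kappa> \<gamma>" by (intro MM) auto
  have M't: "M' (int t) \<in> Mset H (kappaB B) \<kappa> \<gamma>" using Mt McM by (simp add: M'_def)
  have bnn: "0 \<le> beta kB \<kappa> \<gamma> H i" for i using kB1 k1 gam by (intro beta_nonneg) auto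
  have Ynn: "0 \<le> Y \<omega>" for \<omega> unfolding Y_def nz_def using bnn by (intro sum_nonneg mult_nonneg_nonneg) auto
  have S1nn: "0 \<le> (\<Sum>i\<in>{1..H}. 2 * kB * \<kappa>^3 * (1-\<gamma>)^(i-1) * nz (int t - int i) \<omega>)" for \<omega>
    unfolding nz_def using kB1 k1 gam by (intro sum_nonneg mult_nonneg_nonneg) auto
  have YV: "Y \<omega> \<le> V \<omega>" for \<omega>
  proof -
    have "Y \<omega> \<le> \<kappa> * Y \<omega>" using le_mult_ge1[OF Ynn k1] by (simp add: mult.commute)
    then show ?thesis unfolding V_def using S1nn[of \<omega>] by linarith
  qed
  have det: "\<bar>F M \<omega> - F M' \<omega>\<bar> \<le> Gc * V \<omega> * (2 * \<kappa>^3 * kB * D * S \<omega>)" for \<omega>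
  proof -
    let ?z = "wext (\<lambda>r. w r \<omega>)"
    let ?y = "ysur A B K H M ?z (int t)" and ?y' = "ysur A B K H M' ?z (int t)"
    let ?v = "vsur A B K H M ?z (int t)" and ?v' = "vsur A B K H M' ?z (int t)"
    have yb: "norm ?y \<le> Y \<omega>"
      using y_bound[OF stab gam(2), of H M "int t" ?z] MMy by (simp add: Y_def nz_def kB_def)
    have yb': "norm ?y' \<le> Y \<omega>"
      using y_bound[OF stab gam(2), of H M' "int t" ?z] MM'y by (simp add: Y_def nz_def kB_def)
    have vb: "norm ?v \<le> V \<omega>"
      using v_bound[OF stab gam(2) _ Mt yb] k1 by (simp add: V_def nz_def kB_def)
    have vb': "norm ?v' \<le> V \<omega>"
      using v_bound[OF stab gam(2) _ M't yb'] k1 by (simp add: V_def nz_def kB_def)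
    have dy: "norm (?y - ?y') \<le> \<kappa>^2 * kB * D * S0 \<omega>"
      using dy_bound[where M=M and e=e and Mc=Mc and D=D and H=H and tt="int t" and z="?z", OF stab gam(2) hD D0 k1] gam
      by (simp add: M'_def S0_def nz_def kB_def)
    have dv: "norm (?v - ?v') \<le> \<kappa> * norm (?y - ?y') + D * S1 \<omega>"
      using dv_bound[where M=M and e=e and Mc=Mc and D=D and H=H and tt="int t" and z="?z", OF stab hD D0] k1
      by (simp add: M'_def S1_def nz_def)
    have S0nn: "0 \<le> S0 \<omega>" and S1n: "0 \<le> S1 \<omega>" unfolding S0_def S1_def nz_def by (auto intro: sum_nonneg)
    have c0: "0 \<le> \<kappa>^2 * kB * D" using kB1 k1 D0 by simp
    have k23: "\<kappa>^2 \<le> \<kappa>^3" using k1 by (intro power_increasing) auto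
    have dy2: "norm (?y - ?y') \<le> \<kappa>^3 * kB * D * S0 \<omega>"
    proof -
      have "\<kappa>^2 * (kB * D * S0 \<omega>) \<le> \<kappa>^3 * (kB * D * S0 \<omega>)"
        using k23 kB1 D0 S0nn by (intro mult_right_mono) auto
      then show ?thesis using dy by (simp add: mult_ac)
    qed
    define W where "W = \<kappa>^3 * kB * D"
    have W1: "D \<le> W"
    proof -
      have "1 \<le> \<kappa>^3 * kB" using k1 kB1 by (intro ge1_mult one_le_power)
      from mult_right_mono[OF this D0] show ?thesis by (simp add: W_def)
    qed
    have dv2: "norm (?v - ?v') \<le> W * S0 \<omega> + W * S1 \<omega>"
    proof -
      have "\<kappa> * norm (?y - ?y') \<le> \<kappa> * (\<kappa>^2 * kB * D * S0 \<omega>)"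
        using dy k1 by (intro mult_left_mono) auto
      also have "\<dots> = W * S0 \<omega>" by (simp add: W_def power2_eq_square power3_eq_cube mult_ac)
      finally have 1: "\<kappa> * norm (?y - ?y') \<le> W * S0 \<omega>" .
      have 2: "D * S1 \<omega> \<le> W * S1 \<omega>" using W1 S1n by (intro mult_right_mono)
      show ?thesis using dv 1 2 by linarith
    qed
    have dy3: "norm (?y - ?y') \<le> W * S0 \<omega>" using dy2 by (simp add: W_def)
    have W0: "0 \<le> W" using W1 D0 by linarith
    have dsum: "norm (?y - ?y') + norm (?v - ?v') \<le> 2 * W * S \<omega>"
      using dy3 dv2 mult_left_mono[OF S0nn W0] mult_left_mono[OF S1n W0]
      by (simp add: S_def distrib_left)
    have Vnn: "0 \<le> V \<omega>" using Ynn[of \<omega>] YV[of \<omega>] by linarith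
    have m1: "norm ?y * norm (?y - ?y') + norm ?v * norm (?v - ?v') \<le> V \<omega> * (norm (?y - ?y') + norm (?v - ?v'))"
      using mult_right_mono[OF order_trans[OF yb YV] norm_ge_zero[of "?y - ?y'"]]
        mult_right_mono[OF vb norm_ge_zero[of "?v - ?v'"]] by (simp add: distrib_left)
    have m2: "norm ?y' * norm (?y - ?y') + norm ?v' * norm (?v - ?v') \<le> V \<omega> * (norm (?y - ?y') + norm (?v - ?v'))"
      using mult_right_mono[OF order_trans[OF yb' YV] norm_ge_zero[of "?y - ?y'"]]
        mult_right_mono[OF vb' norm_ge_zero[of "?v - ?v'"]] by (simp add: distrib_left)
    have "\<bar>F M \<omega> - F M' \<omega>\<bar> = \<bar>c t ?y ?v - c t ?y' ?v'\<bar>" by (simp add: F_def Fsur_def)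
    also have "\<dots> \<le> Gc * max (norm ?y * norm (?y - ?y') + norm ?v * norm (?v - ?v'))
                                        (norm ?y' * norm (?y - ?y') + norm ?v' * norm (?v - ?v'))"
      by (rule A1_diff[OF A1])
    also have "\<dots> \<le> Gc * (V \<omega> * (norm (?y - ?y') + norm (?v - ?v')))"
      using m1 m2 G1 by (intro mult_left_mono) auto
    also have "\<dots> \<le> Gc * (V \<omega> * (2 * W * S \<omega>))"
      using dsum Vnn G1 by (intro mult_left_mono) auto
    finally show ?thesis by (simp add: W_def mult_ac)
  qed
  have nzI: "integrable \<Omega> (nz s)" for s
    using wnorm(1)[OF w_int A2 s0, where s=s] by (simp add: nz_def[abs_def])
  have nzE: "integral\<^sup>L \<Omega> (nz s) \<le> \<sigma>w" for s
    using wnorm(2)[OF w_int A2 s0, where s=s] by (simp add: nz_def[abs_def])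
  have nzN: "0 \<le> nz s \<omega>" for s \<omega> by (simp add: nz_def)
  have YI: "integrable \<Omega> Y" unfolding Y_def[abs_def] using nzI by auto
  have VI: "integrable \<Omega> V" unfolding V_def[abs_def] using nzI YI by auto
  have SI: "integrable \<Omega> S" unfolding S_def[abs_def] S0_def[abs_def] S1_def[abs_def] using nzI by auto
  have EY: "integral\<^sup>L \<Omega> Y \<le> \<sigma>w * (\<kappa>^2 / \<gamma> + 2 * kB^2 * \<kappa>^5 / \<gamma>^2)"
  proof -
    have "integral\<^sup>L \<Omega> Y = (\<Sum>i\<in>{0..2*H}. beta kB \<kappa> \<gamma> H i * integral\<^sup>L \<Omega> (nz (int t - 1 - int i)))"
      unfolding Y_def[abs_def] using nzI by (simp add: integral_sum)
    also have "\<dots> \<le> (\<Sum>i\<in>{0..2*H}. beta kB \<kappa> \<gamma> H i * \<sigma>w)"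
      by (intro sum_mono mult_left_mono nzE bnn)
    also have "\<dots> = \<sigma>w * (\<Sum>i\<in>{0..2*H}. beta kB \<kappa> \<gamma> H i)" by (simp add: sum_distrib_left mult_ac)
    also have "\<dots> \<le> \<sigma>w * (\<kappa>^2 / \<gamma> + 2 * kB^2 * \<kappa>^5 / \<gamma>^2)"
      using beta_sum[OF gam, of kB \<kappa> H] kB1 k1 s0 by (intro mult_left_mono) auto
    finally show ?thesis .
  qed
  have geo1: "(\<Sum>i\<in>{1..H}. (1-\<gamma>)^(i-1)) \<le> 1 / \<gamma>"
  proof -
    have "inj_on (\<lambda>i. i - 1) {1..H}" by (auto simp: inj_on_def)
    then show ?thesis using geom_inj[of "1-\<gamma>" "{1..H}" "\<lambda>i. i - 1"] gam by simp
  qed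
  have EV: "integral\<^sup>L \<Omega> V \<le> \<sigma>w * (\<kappa> * (\<kappa>^2 / \<gamma> + 2 * kB^2 * \<kappa>^5 / \<gamma>^2) + 2 * kB * \<kappa>^3 / \<gamma>)"
  proof -
    have c0: "0 \<le> 2 * kB * \<kappa>^3 * (1-\<gamma>)^(i-1)" for i using kB1 k1 gam by simp
    have "integral\<^sup>L \<Omega> V = \<kappa> * integral\<^sup>L \<Omega> Y + (\<Sum>i\<in>{1..H}. 2 * kB * \<kappa>^3 * (1-\<gamma>)^(i-1) * integral\<^sup>L \<Omega> (nz (int t - int i)))"
      unfolding V_def[abs_def] using nzI YI by (simp add: integral_sum)
    also have "\<dots> \<le> \<kappa> * (\<sigma>w * (\<kappa>^2 / \<gamma> + 2 * kB^2 * \<kappa>^5 / \<gamma>^2)) + (\<Sum>i\<in>{1..H}. 2 * kB * \<kappa>^3 * (1-\<gamma>)^(i-1) * \<sigma>w)"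
      using EY k1 by (intro add_mono sum_mono mult_left_mono nzE c0) auto
    also have "(\<Sum>i\<in>{1..H}. 2 * kB * \<kappa>^3 * (1-\<gamma>)^(i-1) * \<sigma>w) = 2 * kB * \<kappa>^3 * \<sigma>w * (\<Sum>i\<in>{1..H}. (1-\<gamma>)^(i-1))"
      by (simp add: sum_distrib_left mult_ac)
    also have "\<dots> \<le> 2 * kB * \<kappa>^3 * \<sigma>w * (1 / \<gamma>)"
      using geo1 kB1 k1 s0 by (intro mult_left_mono) auto
    finally show ?thesis by (simp add: algebra_simps)
  qed
  have ES: "integral\<^sup>L \<Omega> S \<le> \<sigma>w * (3 * real H + 1)"
  proof -
    have "integral\<^sup>L \<Omega> S = (\<Sum>i\<in>{0..2*H}. integral\<^sup>L \<Omega> (nz (int t - 1 - int i))) + (\<Sum>i\<in>{1..H}. integral\<^sup>L \<Omega> (nz (int t - int i)))"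
      unfolding S_def[abs_def] S0_def[abs_def] S1_def[abs_def] using nzI by (simp add: integral_sum)
    also have "\<dots> \<le> (\<Sum>i\<in>{0..2*H}. \<sigma>w) + (\<Sum>i\<in>{1..H}. \<sigma>w)"
      by (intro add_mono sum_mono nzE)
    also have "\<dots> = \<sigma>w * (3 * real H + 1)" by (simp add: algebra_simps)
    finally show ?thesis .
  qed
  have thr0: "0 < thr" unfolding thr_def using C L1 R1 k1 kB1 by simp
  have C2: "0 < C / 2" using C by simp
  define B1 where "B1 = {\<omega>\<in>space \<Omega>. V \<omega> \<ge> C / 2}"
  define B2 where "B2 = {\<omega>\<in>space \<Omega>. S \<omega> \<ge> thr}"
  have VN: "0 \<le> V \<omega>" for \<omega> using Ynn[of \<omega>] YV[of \<omega>] by linarith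
  have SN: "0 \<le> S \<omega>" for \<omega> unfolding S_def S0_def S1_def using nzN by (auto intro: sum_nonneg add_nonneg_nonneg)
  have mB1: "measure \<Omega> B1 \<le> \<sigma>w * (\<kappa> * (\<kappa>^2 / \<gamma> + 2 * kB^2 * \<kappa>^5 / \<gamma>^2) + 2 * kB * \<kappa>^3 / \<gamma>) / (C / 2)"
    unfolding B1_def by (rule markov[OF P VI VN C2 EV])
  have mB2: "measure \<Omega> B2 \<le> \<sigma>w * (3 * real H + 1) / thr"
    unfolding B2_def by (rule markov[OF P SI SN thr0 ES])
  have VM: "V \<in> borel_measurable \<Omega>" using VI by (rule borel_measurable_integrable)
  have SM: "S \<in> borel_measurable \<Omega>" using SI by (rule borel_measurable_integrable)
  have B1s: "B1 \<in> sets \<Omega>" unfolding B1_def using VM by measurable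
  have B2s: "B2 \<in> sets \<Omega>" unfolding B2_def using SM by measurable
  have FM: "F N \<in> borel_measurable \<Omega>" for N
    unfolding F_def[abs_def] by (rule meas_F[OF w_meas A1])
  define Good where "Good = {\<omega>\<in>space \<Omega>. \<bar>F M \<omega> - F M' \<omega>\<bar> \<le> G}"
  have Goods: "Good \<in> sets \<Omega>" unfolding Good_def using FM[of M] FM[of M'] by measurable
  have G0: "0 \<le> G" unfolding G_def using G1 C L1 R1 D0 by simp
  have sub: "space \<Omega> - (B1 \<union> B2) \<subseteq> Good"
  proof
    fix \<omega> assume \<omega>: "\<omega> \<in> space \<Omega> - (B1 \<union> B2)"
    then have v: "V \<omega> \<le> C / 2" and sS: "S \<omega> \<le> thr" by (auto simp: B1_def B2_def)
    have "\<bar>F M \<omega> - F M' \<omega>\<bar> \<le> Gc * V \<omega> * (2 * \<kappa>^3 * kB * D * S \<omega>)" by (rule det)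
    also have "\<dots> \<le> Gc * (C / 2) * (2 * \<kappa>^3 * kB * D * thr)"
      using G1 k1 kB1 D0 VN[of \<omega>] SN[of \<omega>] v sS
      by (intro mult_mono mult_left_mono) auto
    also have "\<dots> = G / 2"
      using k1 kB1 by (simp add: G_def thr_def power2_eq_square)
    also have "\<dots> \<le> G" using G0 by simp
    finally show "\<omega> \<in> Good" using \<omega> by (simp add: Good_def)
  qed
  have "1 - (measure \<Omega> B1 + measure \<Omega> B2) \<le> 1 - measure \<Omega> (B1 \<union> B2)"
    using measure_Un_le[OF B1s B2s] by simp
  also have "\<dots> = measure \<Omega> (space \<Omega> - (B1 \<union> B2))"
    using prob_compl[of "B1 \<union> B2"] B1s B2s by simp
  also have "\<dots> \<le> measure \<Omega> Good"
    by (rule finite_measure_mono[OF sub Goods])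
  finally have main: "1 - (measure \<Omega> B1 + measure \<Omega> B2) \<le> measure \<Omega> Good" .
  have fa: "measure \<Omega> B1 + measure \<Omega> B2 \<le> 30 * \<sigma>w * kB^2 * \<kappa>^6 / (C * \<gamma>^2 * (1 - \<gamma>))"
  proof -
    have "measure \<Omega> B1 + measure \<Omega> B2 \<le>
        2 * (\<sigma>w * (\<kappa> * (\<kappa>^2 / \<gamma> + 2 * kB^2 * \<kappa>^5 / \<gamma>^2) + 2 * kB * \<kappa>^3 / \<gamma>)) / C
         + \<sigma>w * (3 * real H + 1) / (C * L * R / (\<kappa>^3 * kB))"
    proof (rule add_mono)
      let ?X = "\<sigma>w * (\<kappa> * (\<kappa>^2 / \<gamma> + 2 * kB^2 * \<kappa>^5 / \<gamma>^2) + 2 * kB * \<kappa>^3 / \<gamma>)"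
      have e: "?X / (C / 2) = 2 * ?X / C" by simp
      show "measure \<Omega> B1 \<le> 2 * ?X / C" using mB1 unfolding e .
      show "measure \<Omega> B2 \<le> \<sigma>w * (3 * real H + 1) / (C * L * R / (\<kappa>^3 * kB))"
        using mB2 by (simp only: thr_def)
    qed
    also have "\<dots> \<le> 30 * \<sigma>w * kB^2 * \<kappa>^6 / (C * \<gamma>^2 * (1 - \<gamma>))"
      by (rule final_arith[OF k1 kB1 gam s0 C L1 R1 Hb])
    finally show ?thesis .
  qed
  have GoodEq: "Good = {\<omega> \<in> space \<Omega>.
             \<bar>Fsur c A B K H M (wext (\<lambda>r. w r \<omega>)) t
              - Fsur c A B K H (M(int t - int k := Mc)) (wext (\<lambda>r. w r \<omega>)) t\<bar>
             \<le> 2 * Gc * C^2 * ln (real T) * (2 / \<gamma> * ln (real T) + 1) powr (1/2)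
                * frob H (\<lambda>i. M (int t - int k) i - Mc i)}"
    by (simp add: Good_def F_def M'_def e_def G_def L_def R_def D_def)
  show ?thesis using main fa GoodEq by (simp add: kB_def)
qed

end
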